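(* Let $G$ be a graph on $n$ vertices, let $k,s$ be positive integers, let $J$ be a $(k,k)$-bigraph, and let $X,Y\subseteq V(G)$ be such that $G[X]$ is $J$-free and $Y$ is $(k,s)$-unrestricted. Then $\min\{|X\setminus Y|,|X\cap Y|\}\le ks$.
   Context: Graphs are finite and simple. A $(k_1,k_2)$-bigraph is a triple $J=(H,A,B)$ with $H$ bipartite with bipartition $(A,B)$, $|A|=k_1$, $|B|=k_2$. An embedding of $J$ into a graph $G$ is an injection $\eta:A\cup B\to V(G)$ such that for all $u\in A$, $v\in B$: $uv\in E(H)$ iff $\eta(u)\eta(v)\in E(G)$; $G$ is $J$-free if no embedding exists. An ordered bigraph is a bigraph with $A$ and $B$ linearly ordered. For disjoint ordered sets $A=(a_1,\dots,a_{k_1})$, $B=(b_1,\dots,b_{k_2})$ of vertices of $G$, $(A,B)$ induces the ordered bigraph $J'$ if $a_ib_j\in E(G)$ exactly when the $i$-th vertex of the first side of $J'$ is adjacent to the $j$-th vertex of its second side. A $k$-base on a set $X$ is a collection of pairwise disjoint ordered $k$-element subsets of $X$. For a $k_1$-base $\mathcal{A}$ and a $k_2$-base $\mathcal{B}$ (on vertex sets of $G$), $(\mathcal{A},\mathcal{B})$ induces $J'$ if some $A\in\mathcal{A}$, $B\in\mathcal{B}$ induce $J'$, is $J'$-free otherwise, and is restricted if it is $J'$-free for some ordered $(k_1,k_2)$-bigraph $J'$. A set $Y\subseteq V(G)$ is $(k,s)$-restricted if there exist a $k$-base $\mathcal{A}$ on $Y$ and a $k$-base $\mathcal{B}$ on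 $V(G)\setminus Y$ with $|\mathcal{A}|,|\mathcal{B}|\ge s$ and $(\mathcal{A},\mathcal{B})$ restricted; otherwise $Y$ is $(k,s)$-unrestricted. *)

theory Defs
  imports Main
begin

definition is_graph :: "'a set \<Rightarrow> ('a \<Rightarrow> 'a \<Rightarrow> bool) \<Rightarrow> bool" where
  "is_graph V E \<longleftrightarrow> finite V \<and> (\<forall>u v. E u v \<longrightarrow> u \<in> V \<and> v \<in> V \<and> u \<noteq> v \<and> E v u)"

definition induced_edges :: "('a \<Rightarrow> 'a \<Rightarrow> bool) \<Rightarrow> 'a set \<Rightarrow> 'a \<Rightarrow> 'a \<Rightarrow> bool" where
  "induced_edges E X = (\<lambda>u v. E u v \<and> u \<in> X \<and> v \<in> X)"

definition is_bigraph :: "('b \<Rightarrow> 'b \<Rightarrow> bool) \<Rightarrow> 'b set \<Rightarrow> 'b set \<Rightarrow> nat \<Rightarrow> nat \<Rightarrow> bool" where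
  "is_bigraph H A B k1 k2 \<longleftrightarrow> is_graph (A \<union> B) H \<and> A \<inter> B = {} \<and> finite A \<and> finite B
     \<and> card A = k1 \<and> card B = k2
     \<and> (\<forall>u v. H u v \<longrightarrow> (u \<in> A \<and> v \<in> B) \<or> (u \<in> B \<and> v \<in> A))"

definition bigraph_embedding ::
  "('b \<Rightarrow> 'b \<Rightarrow> bool) \<Rightarrow> 'b set \<Rightarrow> 'b set \<Rightarrow> 'a set \<Rightarrow> ('a \<Rightarrow> 'a \<Rightarrow> bool) \<Rightarrow> ('b \<Rightarrow> 'a) \<Rightarrow> bool" where
  "bigraph_embedding H A B V E \<eta> \<longleftrightarrow> inj_on \<eta> (A \<union> B) \<and> \<eta> ` (A \<union> B) \<subseteq> V
     \<and> (\<forall>u\<in>A. \<forall>v\<in>B. H u v \<longleftrightarrow> E (\<eta> u) (\<eta> v))"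

definition bigraph_free ::
  "'a set \<Rightarrow> ('a \<Rightarrow> 'a \<Rightarrow> bool) \<Rightarrow> ('b \<Rightarrow> 'b \<Rightarrow> bool) \<Rightarrow> 'b set \<Rightarrow> 'b set \<Rightarrow> bool" where
  "bigraph_free V E H A B \<longleftrightarrow> \<not> (\<exists>\<eta>. bigraph_embedding H A B V E \<eta>)"

text \<open>An ordered (k1,k2)-bigraph is represented by its adjacency relation M on indices
  (i < k1 for the first side, j < k2 for the second side); ordered k-element sets are
  distinct lists of length k.\<close>
definition induces_ordered ::
  "('a \<Rightarrow> 'a \<Rightarrow> bool) \<Rightarrow> nat \<Rightarrow> nat \<Rightarrow> (nat \<Rightarrow> nat \<Rightarrow> bool) \<Rightarrow> 'a list \<Rightarrow> 'a list \<Rightarrow> bool" where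
  "induces_ordered E k1 k2 M as bs \<longleftrightarrow> set as \<inter> set bs = {}
     \<and> (\<forall>i<k1. \<forall>j<k2. E (as ! i) (bs ! j) \<longleftrightarrow> M i j)"

definition k_base :: "nat \<Rightarrow> 'a set \<Rightarrow> 'a list set \<Rightarrow> bool" where
  "k_base k X \<A> \<longleftrightarrow> (\<forall>L\<in>\<A>. distinct L \<and> length L = k \<and> set L \<subseteq> X)
     \<and> (\<forall>L1\<in>\<A>. \<forall>L2\<in>\<A>. L1 \<noteq> L2 \<longrightarrow> set L1 \<inter> set L2 = {})"

definition pair_induces ::
  "('a \<Rightarrow> 'a \<Rightarrow> bool) \<Rightarrow> nat \<Rightarrow> nat \<Rightarrow> (nat \<Rightarrow> nat \<Rightarrow> bool) \<Rightarrow> 'a list set \<Rightarrow> 'a list set \<Rightarrow> bool" where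
  "pair_induces E k1 k2 M \<A> \<B> \<longleftrightarrow> (\<exists>as\<in>\<A>. \<exists>bs\<in>\<B>. induces_ordered E k1 k2 M as bs)"

definition pair_restricted ::
  "('a \<Rightarrow> 'a \<Rightarrow> bool) \<Rightarrow> nat \<Rightarrow> nat \<Rightarrow> 'a list set \<Rightarrow> 'a list set \<Rightarrow> bool" where
  "pair_restricted E k1 k2 \<A> \<B> \<longleftrightarrow> (\<exists>M. \<not> pair_induces E k1 k2 M \<A> \<B>)"

definition ks_restricted :: "'a set \<Rightarrow> ('a \<Rightarrow> 'a \<Rightarrow> bool) \<Rightarrow> nat \<Rightarrow> nat \<Rightarrow> 'a set \<Rightarrow> bool" where
  "ks_restricted V E k s Y \<longleftrightarrow> (\<exists>\<A> \<B>. k_base k Y \<A> \<and> k_base k (V - Y) \<B>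
     \<and> card \<A> \<ge> s \<and> card \<B> \<ge> s \<and> pair_restricted E k k \<A> \<B>)"

definition ks_unrestricted :: "'a set \<Rightarrow> ('a \<Rightarrow> 'a \<Rightarrow> bool) \<Rightarrow> nat \<Rightarrow> nat \<Rightarrow> 'a set \<Rightarrow> bool" where
  "ks_unrestricted V E k s Y \<longleftrightarrow> \<not> ks_restricted V E k s Y"

end

theory Submission
  imports Defs
begin

lemma exists_base:
  assumes "finite S" "k * s \<le> card S" "0 < k"
  shows "\<exists>\<A>. k_base k S \<A> \<and> card \<A> = s"
  using assms
proof (induction s arbitrary: S)
  case 0
  show ?case by (rule exI[of _ "{}"]) (simp add: k_base_def)
next
  case (Suc s)
  have kle: "k \<le> card S" using Suc.prems(2) by simp
  obtain T where T: "T \<subseteq> S" "card T = k" "finite T"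
    using obtain_subset_with_card_n[OF kle] by metis
  obtain L where L: "set L = T" "distinct L" using finite_distinct_list[OF T(3)] by metis
  have lenL: "length L = k" using L T(2) distinct_card by metis
  have "card (S - T) = card S - k" using T by (simp add: card_Diff_subset)
  then have "k * s \<le> card (S - T)" using Suc.prems(2) by simp
  moreover have "finite (S - T)" using Suc.prems(1) by simp
  ultimately obtain \<A> where A: "k_base k (S - T) \<A>" "card \<A> = s"
    using Suc.IH Suc.prems(3) by metis
  have 1: "\<forall>L'\<in>\<A>. distinct L' \<and> length L' = k \<and> set L' \<subseteq> S - T"
    and 2: "\<forall>L1\<in>\<A>. \<forall>L2\<in>\<A>. L1 \<noteq> L2 \<longrightarrow> set L1 \<inter> set L2 = {}"
    using A(1) unfolding k_base_def by simp_all
  have ne: "L \<noteq> []" using lenL Suc.prems(3) by auto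
  then obtain x where x: "x \<in> set L" by (metis list.set_sel(1))
  have notin: "L \<notin> \<A>"
  proof
    assume "L \<in> \<A>"
    then have "set L \<subseteq> S - T" using 1 by simp
    then show False using L(1) x by blast
  qed
  have 3: "\<forall>L'\<in>\<A>. set L \<inter> set L' = {} \<and> set L' \<inter> set L = {}" using 1 L(1) by blast
  have "k_base k S (insert L \<A>)"
    unfolding k_base_def
  proof (rule conjI)
    show "\<forall>L'\<in>insert L \<A>. distinct L' \<and> length L' = k \<and> set L' \<subseteq> S"
      using 1 L lenL T(1) by blast
    show "\<forall>L1\<in>insert L \<A>. \<forall>L2\<in>insert L \<A>. L1 \<noteq> L2 \<longrightarrow> set L1 \<inter> set L2 = {}"
      using 2 3 by blast
  qed
  moreover have "card (insert L \<A>) = Suc s"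
  proof -
    have "\<A> \<subseteq> {L. set L \<subseteq> S \<and> length L = k}" using 1 by blast
    moreover have "finite {L. set L \<subseteq> S \<and> length L = k}"
      using finite_lists_length_eq[OF Suc.prems(1)] by simp
    ultimately have "finite \<A>" by (rule finite_subset)
    then show ?thesis using notin A(2) by simp
  qed
  ultimately show ?case by blast
qed

theorem lemma3p10:
  fixes V :: "'a set" and E :: "'a \<Rightarrow> 'a \<Rightarrow> bool" and n k s :: nat
    and H :: "'b \<Rightarrow> 'b \<Rightarrow> bool" and A B :: "'b set" and X Y :: "'a set"
  assumes "is_graph V E" and "card V = n"
    and "0 < k" and "0 < s"
    and "is_bigraph H A B k k"
    and "X \<subseteq> V" and "Y \<subseteq> V"
    and "bigraph_free X (induced_edges E X) H A B"
    and "ks_unrestricted V E k s Y"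
  shows "min (card (X - Y)) (card (X \<inter> Y)) \<le> k * s"
proof (rule ccontr)
  assume "\<not> ?thesis"
  then have c1: "k * s \<le> card (X - Y)" and c2: "k * s \<le> card (X \<inter> Y)" by auto
  have fX: "finite X" using assms(1,6) finite_subset unfolding is_graph_def by blast
  obtain \<A> where bA: "k_base k (X \<inter> Y) \<A>" "card \<A> = s"
    using exists_base[OF _ c2 assms(3)] fX by blast
  obtain \<B> where bB: "k_base k (X - Y) \<B>" "card \<B> = s"
    using exists_base[OF _ c1 assms(3)] fX by blast
  have "k_base k Y \<A>" using bA(1) unfolding k_base_def by blast
  moreover have "k_base k (V - Y) \<B>" using bB(1) assms(6) unfolding k_base_def by blast
  ultimately have all: "\<And>M. pair_induces E k k M \<A> \<B>"
    using assms(9) bA(2) bB(2) unfolding ks_unrestricted_def ks_restricted_def pair_restricted_def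
    by auto
  have AB: "finite A" "finite B" "card A = k" "card B = k" "A \<inter> B = {}"
    using assms(5) unfolding is_bigraph_def by auto
  obtain fa where fa: "bij_betw fa {0..<k} A" using ex_bij_betw_nat_finite[OF AB(1)] AB(3) by blast
  obtain fb where fb: "bij_betw fb {0..<k} B" using ex_bij_betw_nat_finite[OF AB(2)] AB(4) by blast
  define M where "M = (\<lambda>i j. H (fa i) (fb j))"
  obtain as bs where asbs: "as \<in> \<A>" "bs \<in> \<B>" "induces_ordered E k k M as bs"
    using all[of M] unfolding pair_induces_def by blast
  have as: "distinct as" "length as = k" "set as \<subseteq> X" and bs: "distinct bs" "length bs = k" "set bs \<subseteq> X"
    using bA(1) bB(1) asbs(1,2) unfolding k_base_def by auto
  have disj: "set as \<inter> set bs = {}" and edge: "\<And>i j. i < k \<Longrightarrow> j < k \<Longrightarrow> E (as ! i) (bs ! j) = M i j"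
    using asbs(3) unfolding induces_ordered_def by auto
  define ia where "ia = inv_into {0..<k} fa"
  define ib where "ib = inv_into {0..<k} fb"
  have ia: "\<And>x. x \<in> A \<Longrightarrow> ia x < k \<and> fa (ia x) = x"
    using fa unfolding ia_def
    by (metis atLeastLessThan_iff bij_betw_def f_inv_into_f inv_into_into)
  have ib: "\<And>x. x \<in> B \<Longrightarrow> ib x < k \<and> fb (ib x) = x"
    using fb unfolding ib_def
    by (metis atLeastLessThan_iff bij_betw_def f_inv_into_f inv_into_into)
  define \<eta> where "\<eta> = (\<lambda>x. if x \<in> A then as ! ia x else bs ! ib x)"
  have inA: "\<And>x. x \<in> A \<Longrightarrow> \<eta> x \<in> set as" unfolding \<eta>_def using ia as(2) by auto
  have inB: "\<And>x. x \<in> B \<Longrightarrow> \<eta> x \<in> set bs" unfolding \<eta>_def using ib bs(2) AB(5) by auto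
  have "inj_on \<eta> (A \<union> B)"
  proof (rule inj_onI)
    fix x y assume xy: "x \<in> A \<union> B" "y \<in> A \<union> B" "\<eta> x = \<eta> y"
    show "x = y"
    proof (cases "x \<in> A")
      case True
      show ?thesis
      proof (cases "y \<in> A")
        case True
        then have "as ! ia x = as ! ia y" using xy(3) \<open>x \<in> A\<close> unfolding \<eta>_def by simp
        then have "ia x = ia y" using as ia True \<open>x \<in> A\<close> nth_eq_iff_index_eq by metis
        then show ?thesis using ia True \<open>x \<in> A\<close> by metis
      next
        case False
        then show ?thesis using inA[OF \<open>x \<in> A\<close>] inB xy disj by auto
      qed
    next
      case False
      then have xB: "x \<in> B" using xy by auto
      show ?thesis
      proof (cases "y \<in> A")
        case True
        then show ?thesis using inA inB[OF xB] xy disj by auto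
      next
        case False
        then have yB: "y \<in> B" using xy by auto
        have "bs ! ib x = bs ! ib y" using xy(3) \<open>x \<notin> A\<close> False unfolding \<eta>_def by simp
        then have "ib x = ib y" using bs ib xB yB nth_eq_iff_index_eq by metis
        then show ?thesis using ib xB yB by metis
      qed
    qed
  qed
  moreover have "\<eta> ` (A \<union> B) \<subseteq> X" using inA inB as(3) bs(3) by blast
  moreover have "\<forall>u\<in>A. \<forall>v\<in>B. H u v \<longleftrightarrow> induced_edges E X (\<eta> u) (\<eta> v)"
  proof (intro ballI)
    fix u v assume u: "u \<in> A" and v: "v \<in> B"
    have "\<eta> u = as ! ia u" "\<eta> v = bs ! ib v" using u v AB(5) unfolding \<eta>_def by auto
    moreover have "E (as ! ia u) (bs ! ib v) = H u v"
      using edge[of "ia u" "ib v"] ia[OF u] ib[OF v] unfolding M_def by simp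
    ultimately show "H u v \<longleftrightarrow> induced_edges E X (\<eta> u) (\<eta> v)"
      using inA[OF u] inB[OF v] as(3) bs(3) unfolding induced_edges_def by auto
  qed
  ultimately have "bigraph_embedding H A B X (induced_edges E X) \<eta>"
    unfolding bigraph_embedding_def by blast
  then show False using assms(8) unfolding bigraph_free_def by blast
qed

end
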